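(* Let $m\in\mathbb{Z}^+$ and $r\in\mathbb{Z}$ be relatively prime. Then for any $n\in\mathbb{Z}^+$ (such that $km+r\neq0$ for $0\le k\le n-1$), $$\frac1n\sum_{k=0}^{n-1}\frac1{km+r}\equiv\frac1r+\frac m2[\![2\mid n]\!]\pmod m,$$ where $[\![2\mid n]\!]$ is $1$ if $n$ is even and $0$ otherwise.
   Context: For rational numbers $u,v$, $u\equiv v\pmod m$ means that $(u-v)/m$ is a rational number whose reduced denominator is coprime to $m$. *)

theory Defs
  imports "HOL-Computational_Algebra.Computational_Algebra"
begin

definition rat_cong :: "rat \<Rightarrow> rat \<Rightarrow> int \<Rightarrow> bool" where
  "rat_cong u v m \<longleftrightarrow> coprime (snd (quotient_of ((u - v) / of_int m))) m"

end

theory Submission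
  imports Defs
begin


definition okM :: "int \<Rightarrow> rat \<Rightarrow> bool" where
  "okM M x \<longleftrightarrow> coprime (snd (quotient_of x)) M"

lemma okM_elim:
  assumes "okM M x" obtains a b where "coprime b M" "b \<noteq> 0" "x = of_int a / of_int b"
proof -
  obtain a b where q: "quotient_of x = (a, b)" by (cases "quotient_of x")
  have "x = of_int a / of_int b" using quotient_of_div[OF q] .
  moreover have "b > 0" using quotient_of_denom_pos[OF q] .
  moreover have "coprime b M" using assms q unfolding okM_def by simp
  ultimately show ?thesis using that by auto
qed

lemma okM_intro:
  assumes "coprime b M" "x = of_int a / of_int b"
  shows "okM M x"
proof (cases "b = 0")
  case True then show ?thesis using assms by (simp add: okM_def)
next
  case False
  obtain p q where qq: "quotient_of x = (p, q)" by (cases "quotient_of x")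
  have xq: "x = of_int p / of_int q" using quotient_of_div[OF qq] .
  have q0: "q > 0" using quotient_of_denom_pos[OF qq] .
  have cop: "coprime p q" using quotient_of_coprime[OF qq] .
  have "of_int p / of_int q = (of_int a / of_int b :: rat)" using xq assms by simp
  then have "(of_int (p * b) :: rat) = of_int (a * q)" using False q0 by (simp add: field_simps)
  then have e: "p * b = a * q" by (simp only: of_int_eq_iff)
  have "q dvd p * b" using e by simp
  then have "q dvd b" using cop by (metis coprime_commute coprime_dvd_mult_right_iff)
  then have "coprime q M" using assms(1) by (meson coprime_divisors dvd_refl)
  then show ?thesis using qq by (simp add: okM_def)
qed

lemma okM_int: "okM M (of_int a)"
  by (rule okM_intro[of 1 _ _ a]) auto

lemma okM_add: assumes "okM M x" "okM M y" shows "okM M (x + y)"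
proof -
  obtain a b where ab: "coprime b M" "b \<noteq> 0" "x = of_int a / of_int b" using okM_elim[OF assms(1)] by blast
  obtain c d where cd: "coprime d M" "d \<noteq> 0" "y = of_int c / of_int d" using okM_elim[OF assms(2)] by blast
  show ?thesis
    by (rule okM_intro[of "b*d" _ _ "a*d + c*b"]) (use ab cd in \<open>auto simp: field_simps\<close>)
qed

lemma okM_mult: assumes "okM M x" "okM M y" shows "okM M (x * y)"
proof -
  obtain a b where ab: "coprime b M" "b \<noteq> 0" "x = of_int a / of_int b" using okM_elim[OF assms(1)] by blast
  obtain c d where cd: "coprime d M" "d \<noteq> 0" "y = of_int c / of_int d" using okM_elim[OF assms(2)] by blast
  show ?thesis
    by (rule okM_intro[of "b*d" _ _ "a*c"]) (use ab cd in \<open>auto simp: field_simps\<close>)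
qed

lemma okM_uminus: assumes "okM M x" shows "okM M (- x)"
  using okM_mult[OF okM_int[of M "-1"] assms] by simp

lemma okM_diff: assumes "okM M x" "okM M y" shows "okM M (x - y)"
  using okM_add[OF assms(1) okM_uminus[OF assms(2)]] by simp

lemma okM_sum: "(\<And>i. i \<in> A \<Longrightarrow> okM M (f i)) \<Longrightarrow> okM M (\<Sum>i\<in>A. f i)"
  by (induction A rule: infinite_finite_induct) (auto intro: okM_add simp: okM_int[of M 0, simplified])

lemma okM_frac: "coprime b M \<Longrightarrow> okM M (of_int a / of_int b)"
  by (rule okM_intro) auto



definition T :: "nat \<Rightarrow> int \<Rightarrow> int \<Rightarrow> rat" where
  "T n m r = (\<Sum>k<n. 1 / of_int (int k * m + r))"

definition Phi :: "nat \<Rightarrow> int \<Rightarrow> int \<Rightarrow> rat" where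
  "Phi n m r = (T n m r / of_nat n - 1 / of_int r - of_int m / 2 * (if even n then 1 else 0)) / of_int m"

lemma Phi_inv: "n > 0 \<Longrightarrow> m \<noteq> 0 \<Longrightarrow>
  T n m r = of_nat n * (1 / of_int r + of_int m / 2 * (if even n then 1 else 0) + of_int m * Phi n m r)"
  unfolding Phi_def by (simp add: field_simps)

lemma gauss_rat: "(\<Sum>k<q. (of_nat k :: rat)) * 2 = of_nat q * (of_nat q - 1)"
  by (induction q) (auto simp: algebra_simps)

lemma expand3: fixes x y :: rat assumes "x \<noteq> 0" "x + y \<noteq> 0"
  shows "1 / (x + y) = 1 / x - y / x^2 + y^2 / (x^2 * (x + y))"
proof -
  have d: "x^2 * (x + y) \<noteq> 0" using assms by simp
  have "1 / x - y / x^2 + y^2 / (x^2 * (x + y)) = ((x - y) * (x + y) + y^2) / (x^2 * (x + y))"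
    using assms d by (simp add: divide_simps power2_eq_square)
  also have "(x - y) * (x + y) + y^2 = x^2" by (simp add: algebra_simps power2_eq_square)
  also have "x^2 / (x^2 * (x + y)) = 1 / (x + y)" using assms by simp
  finally show ?thesis by simp
qed
lemma prime_case:
  fixes q :: nat and M m r :: int
  assumes q: "prime q" and H: "\<forall>k::int. coprime M (k*m+r)"
    and G: "\<forall>p::int. prime p \<longrightarrow> p dvd M \<longrightarrow> p dvd m"
    and nz: "\<forall>k<q. int k*m+r \<noteq> 0" and m0: "m \<noteq> 0"
  shows "okM M (Phi q m r)"
proof -
  have q0: "q > 0" using q prime_gt_0_nat by blast
  have r0: "r \<noteq> 0" using nz q0 by auto
  have cr: "coprime r M" using H[rule_format, of 0] by (simp add: coprime_commute)
  define E where "E = (\<Sum>k<q. (of_nat k)^2 / (of_int r ^ 2 * of_int (int k * m + r)) :: rat)"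
  have trm: "1 / (of_int (int k * m + r) :: rat) = 1 / of_int r - of_int m * of_nat k / of_int r ^ 2
      + of_int m ^ 2 * ((of_nat k)^2 / (of_int r ^ 2 * of_int (int k * m + r)))" if "k < q" for k
  proof -
    have a: "(of_int (int k * m + r) :: rat) \<noteq> 0" using nz that by (simp only: of_int_eq_0_iff) simp
    have b: "(of_int r :: rat) \<noteq> 0" using r0 by simp
    have e: "(of_int (int k * m + r) :: rat) = of_int r + of_int m * of_nat k" by simp
    have x: "(of_int r :: rat) + of_int m * of_nat k \<noteq> 0" using a e by metis
    have "1 / ((of_int r :: rat) + of_int m * of_nat k) = 1 / of_int r - of_int m * of_nat k / of_int r ^ 2
      + of_int m ^ 2 * ((of_nat k)^2 / (of_int r ^ 2 * (of_int r + of_int m * of_nat k)))"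
      using expand3[OF b x] by (simp add: power_mult_distrib)
    then show ?thesis using e by metis
  qed
  have TE: "T q m r = of_nat q / of_int r - of_int m / of_int r ^ 2 * (\<Sum>k<q. of_nat k) + of_int m ^ 2 * E"
  proof -
    have "T q m r = (\<Sum>k<q. 1 / of_int r - of_int m * of_nat k / of_int r ^ 2
      + of_int m ^ 2 * ((of_nat k)^2 / (of_int r ^ 2 * of_int (int k * m + r))))"
      unfolding T_def by (rule sum.cong[OF refl]) (simp only: trm lessThan_iff)
    also have "\<dots> = of_nat q / of_int r - of_int m / of_int r ^ 2 * (\<Sum>k<q. of_nat k) + of_int m ^ 2 * E"
      unfolding E_def sum.distrib sum_subtractf sum_distrib_left sum_divide_distrib by simp
    finally show ?thesis .
  qed
  have S: "(\<Sum>k<q. (of_nat k :: rat)) = of_nat q * (of_nat q - 1) / 2"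
    using gauss_rat[of q] by simp
  define A where "A = - (of_nat q - 1) / (2 * of_int r ^ 2) - (if even q then 1 else 0) / (2::rat)"
  have PhiE: "Phi q m r = A + of_int m / of_nat q * E"
    unfolding Phi_def TE S A_def using q0 m0 r0 by (simp add: field_simps power2_eq_square)
  have okE: "okM M E" unfolding E_def
  proof (rule okM_sum)
    fix k assume "k \<in> {..<q}"
    have "coprime (int k * m + r) M" using H by (simp add: coprime_commute)
    then have "coprime (r^2 * (int k * m + r)) M" using cr by simp
    then show "okM M ((of_nat k)^2 / (of_int r ^ 2 * of_int (int k * m + r)))"
      using okM_frac[of "r^2 * (int k * m + r)" M "int k ^ 2"] by simp
  qed
  have okA: "okM M A"
  proof (cases "even q")
    case False
    then obtain t where t: "q = 2 * t + 1" by (metis oddE)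
    have "A = of_int (- int t) / of_int (r^2)" unfolding A_def using False t r0 by (simp add: field_simps)
    then show ?thesis using okM_frac[of "r^2" M "- int t"] cr by simp
  next
    case True
    then have "2 dvd q" by simp
    then have q2: "q = 2" using q primes_dvd_imp_eq two_is_prime_nat by blast
    show ?thesis
    proof (cases "2 dvd M")
      case True
      have "odd r"
      proof
        assume "even r"
        then have "is_unit (2::int)" using coprime_common_divisor[OF cr _ True] by simp
        then show False by simp
      qed
      then have "even (1 + r^2)" by simp
      then obtain t where t: "1 + r^2 = 2 * t" by blast
      have t': "(1 + of_int r ^ 2 :: rat) = 2 * of_int t" using arg_cong[OF t, of "of_int :: int \<Rightarrow> rat"] by simp
      have "A = - (1 + of_int r ^ 2) / (2 * of_int r ^ 2)" unfolding A_def using q2 r0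
        by (simp add: field_simps)
      also have "\<dots> = of_int (- t) / of_int (r^2)" unfolding t' by simp
      finally have "A = of_int (- t) / of_int (r^2)" .
      then show ?thesis using okM_frac[of "r^2" M "- t"] cr by simp
    next
      case False
      then have "coprime 2 M" by (intro prime_imp_coprime) auto
      then have "coprime (2 * r^2) M" using cr by simp
      moreover have "A = of_int (- (1 + r^2)) / of_int (2 * r^2)" unfolding A_def using q2 r0
        by (simp add: field_simps)
      ultimately show ?thesis using okM_frac[of "2 * r^2" M "- (1 + r^2)"] by simp
    qed
  qed
  have okB: "okM M (of_int m / of_nat q)"
  proof (cases "int q dvd m")
    case True
    then obtain c where "m = int q * c" by blast
    then have "of_int m / of_nat q = (of_int c :: rat)" using q0 by simp
    then show ?thesis using okM_int by simp
  next
    case False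
    have qi: "prime (int q)" using q by simp
    then have "\<not> int q dvd M" using G False by blast
    then have "coprime (int q) M" by (intro prime_imp_coprime qi)
    then show ?thesis using okM_frac[of "int q" M m] by simp
  qed
  show ?thesis unfolding PhiE by (intro okM_add okM_mult okA okB okE)
qed


lemma sum_split: fixes q b :: nat shows "(\<Sum>k<q*b. (f k :: 'a::comm_monoid_add)) = (\<Sum>i<q. \<Sum>j<b. f (i + q*j))"
proof (induction b)
  case 0 then show ?case by simp
next
  case (Suc b)
  have "(\<Sum>k<q*Suc b. f k) = (\<Sum>k<q*b. f k) + (\<Sum>k\<in>{q*b..<q*b+q}. f k)"
    by (simp add: lessThan_atLeast0 sum.atLeastLessThan_concat add.commute)
  also have "(\<Sum>k\<in>{q*b..<q*b+q}. f k) = (\<Sum>i<q. f (i + q*b))"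
    using sum.shift_bounds_nat_ivl[of f 0 "q*b" q] by (simp add: lessThan_atLeast0 add.commute)
  finally show ?case using Suc by (simp add: sum.distrib)
qed


lemma main:
  fixes M :: int and n :: nat
  shows "n > 0 \<Longrightarrow> \<forall>m r. m \<noteq> 0 \<longrightarrow> (\<forall>k::int. coprime M (k*m+r)) \<longrightarrow>
    (\<forall>p::int. prime p \<longrightarrow> p dvd M \<longrightarrow> p dvd m) \<longrightarrow> (\<forall>k<n. int k*m+r \<noteq> 0) \<longrightarrow> okM M (Phi n m r)"
proof (induction n rule: less_induct)
  case (less n)
  show ?case
  proof (intro allI impI)
    fix m r :: int
    assume m0: "m \<noteq> 0" and H: "\<forall>k::int. coprime M (k*m+r)"
      and G: "\<forall>p::int. prime p \<longrightarrow> p dvd M \<longrightarrow> p dvd m" and nz: "\<forall>k<n. int k*m+r \<noteq> 0"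
    show "okM M (Phi n m r)"
    proof (cases "n = 1")
      case True
      have "Phi n m r = of_int 0" unfolding Phi_def T_def True by simp
      then show ?thesis using okM_int by metis
    next
      case False
      obtain q where q: "prime q" "q dvd n" using prime_factor_nat[OF False] by blast
      define b where "b = n div q"
      have nqb: "n = q * b" using q(2) unfolding b_def by simp
      have q0: "q > 1" using q(1) prime_gt_1_nat by blast
      have b0: "b > 0" using nqb less.prems by (cases b) auto
      show ?thesis
      proof (cases "b = 1")
        case True
        then have "n = q" using nqb by simp
        then show ?thesis using prime_case[OF q(1) H G _ m0] nz by blast
      next
        case False
        have bn: "b < n" using nqb q0 b0 by simp
        define X where "X i = Phi b (int q * m) (int i * m + r)" for i
        define Y where "Y = Phi q m r"
        have okX: "okM M (X i)" if "i < q" for i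
          unfolding X_def
        proof (rule less.IH[OF bn b0, rule_format])
          show "int q * m \<noteq> 0" using m0 q0 by simp
          show "coprime M (k * (int q * m) + (int i * m + r))" for k
            using H[rule_format, of "k * int q + int i"] by (simp add: algebra_simps)
          show "p dvd int q * m" if "prime p" "p dvd M" for p using G that by simp
          show "int k * (int q * m) + (int i * m + r) \<noteq> 0" if "k < b" for k
          proof -
            have "i + q * k < q * (k + 1)" using \<open>i < q\<close> by simp
            also have "q * (k + 1) \<le> q * b" using that by (intro mult_le_mono2) simp
            finally have "i + q * k < n" using nqb by simp
            then have "int (i + q * k) * m + r \<noteq> 0" using nz by blast
            then show ?thesis by (simp add: algebra_simps)
          qed
        qed
        have okY: "okM M Y" unfolding Y_def
        proof (rule prime_case[OF q(1) H G _ m0], intro allI impI)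
          fix k assume "k < q"
          moreover have "q \<le> n" using nqb b0 by simp
          ultimately show "int k * m + r \<noteq> 0" using nz by simp
        qed
        define eq where "eq = (if even q then 1 else 0 :: rat)"
        define eb where "eb = (if even b then 1 else 0 :: rat)"
        define en where "en = (if even n then 1 else 0 :: rat)"
        have Ti: "T b (int q*m) (int i*m+r) = of_nat b * (1/of_int(int i*m+r) + of_int(int q*m)/2*eb + of_int(int q*m) * X i)" for i
          unfolding X_def eb_def using Phi_inv[OF b0, of "int q * m"] m0 q0 by simp
        have Tq: "T q m r = of_nat q * (1/of_int r + of_int m/2*eq + of_int m * Y)"
          unfolding Y_def eq_def using Phi_inv[of q m r] m0 q0 by simp
        have Tn: "T n m r = (\<Sum>i<q. T b (int q*m) (int i*m+r))"
          unfolding T_def nqb sum_split by (intro sum.cong refl) (simp add: algebra_simps)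
        also have "\<dots> = (\<Sum>i<q. of_nat b * (1/of_int(int i*m+r) + of_int(int q*m)/2*eb + of_int(int q*m) * X i))"
          by (rule sum.cong[OF refl]) (rule Ti)
        also have "\<dots> = of_nat b * ((\<Sum>i<q. 1/of_int(int i*m+r)) + of_nat q*(of_int(int q*m)/2*eb) + of_int(int q*m)*(\<Sum>i<q. X i))"
          by (simp add: sum.distrib sum_distrib_left distrib_left)
        also have "(\<Sum>i<q. 1/of_int(int i*m+r)) = T q m r" unfolding T_def by simp
        finally have TT: "T n m r = of_nat b * (of_nat q * (1/of_int r + of_int m/2*eq + of_int m * Y)
           + of_nat q*(of_int(int q*m)/2*eb) + of_int(int q*m)*(\<Sum>i<q. X i))" unfolding Tq .
        have PhiN: "Phi n m r = Y + (\<Sum>i<q. X i) + (eq + of_nat q * eb - en) / 2"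
        proof -
          have "Phi n m r = (T n m r / of_nat n - 1/of_int r - of_int m/2*en)/of_int m"
            unfolding Phi_def en_def ..
          also have "\<dots> = (T n m r / of_nat (q * b) - 1/of_int r - of_int m/2*en)/of_int m"
            using nqb by simp
          also have "\<dots> = Y + (\<Sum>i<q. X i) + (eq + of_nat q * eb - en) / 2"
            unfolding TT using m0 q0 b0 by (simp add: field_simps)
          finally show ?thesis .
        qed
        have okC: "okM M ((eq + of_nat q * eb - en) / 2)"
        proof (cases "even q")
          case True
          then have "q = 2" using q(1) primes_dvd_imp_eq two_is_prime_nat by blast
          moreover have "en = 1" unfolding en_def nqb using True by simp
          ultimately have "(eq + of_nat q * eb - en) / 2 = eb" unfolding eq_def by simp
          then show ?thesis unfolding eb_def using okM_int[of M 1] okM_int[of M 0] by simp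
        next
          case False
          then obtain t where t: "q = 2 * t + 1" by (metis oddE)
          have "en = eb" unfolding en_def eb_def nqb using False by simp
          then have "(eq + of_nat q * eb - en) / 2 = of_int (int t) * eb" unfolding eq_def t using False by (simp add: algebra_simps)
          then show ?thesis unfolding eb_def using okM_int[of M "int t"] okM_int[of M 0] by simp
        qed
        show ?thesis unfolding PhiN
          by (intro okM_add okY okC okM_sum okX) simp
      qed
    qed
  qed
qed

theorem lemma3p1:
  fixes m r :: int and n :: nat
  assumes "m > 0" and "coprime m r" and "n > 0"
    and "\<forall>k<n. int k * m + r \<noteq> 0"
  shows "rat_cong ((1 / of_nat n) * (\<Sum>k<n. 1 / of_int (int k * m + r)))
                  (1 / of_int r + of_int m / 2 * (if even n then 1 else 0)) m"
proof -
  have H: "\<forall>k::int. coprime m (k*m+r)" using assms(2) by (simp add: coprime_iff_gcd_eq_1 gcd_add_mult)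
  have "okM m (Phi n m r)"
    using main[OF assms(3), rule_format, of m m r] assms(1,4) H by simp
  moreover have "Phi n m r = ((1 / of_nat n) * (\<Sum>k<n. 1 / of_int (int k * m + r)) -
                  (1 / of_int r + of_int m / 2 * (if even n then 1 else 0))) / of_int m"
    unfolding Phi_def T_def by simp
  ultimately show ?thesis unfolding rat_cong_def okM_def by simp
qed

end
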